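(* Consider the problem and algorithm AC2CD described in the context, let $\{x^k\}$ be a sequence produced by AC2CD, and assume $\lim_{k\to\infty}x^k=x^*$. Then there exists an outer iteration $k_z$ such that, for all $k\ge k_z$, \[ l_{j(k)}<z^{k,i}_{j(k)}<u_{j(k)},\quad i=1,\dots,n+1. \]
   Context: Problem: minimize $f(x)$ subject to $e^T x = b$ and $l_i \le x_i \le u_i$ ($i=1,\dots,n$), where $n\ge 2$, $e$ is the all-ones vector, $b\in\mathbb{R}$, $l_i\in\mathbb{R}\cup\{-\infty\}$, $u_i\in\mathbb{R}\cup\{+\infty\}$, $l_i<u_i$, and $f:\mathbb{R}^n\to\mathbb{R}$ is continuously differentiable with $\nabla f$ Lipschitz continuous on $\mathbb{R}^n$. $\mathcal F$ is the feasible set, $e_i$ the $i$th unit vector. For $x\in\mathcal F$, $D_h(x)=\min\{x_h-l_h,u_h-x_h\}$. Algorithm AC2CD with parameters $\tau\in(0,1]$, $\gamma,\delta\in(0,1)$, $0<A_l\le A_u<\infty$ and starting point $x^0\in\mathcal F$: for $k=0,1,2,\dots$: let $D^k=\max_h D_h(x^k)$; choose $j(k)$ with $D_{j(k)}(x^k)\ge\tau D^k$; choose a permutation $(p^k_1,\dots,p^k_n)$ of $\{1,\dots,n\}$; set $z^{k,1}=x^k$; for $i=1,\dots,n$ (inner iteration $(k,i)$): $g^{k,i}=\nabla_{j(k)}f(z^{k,i})-\nabla_{p^k_i}f(z^{k,i})$, $d^{k,i}=g^{k,i}(e_{p^k_i}-e_{j(k)})$; $\bar\alpha^{k,i}=\min\{u_{p^k_i}-z^{k,i}_{p^k_i},z^{k,i}_{j(k)}-l_{j(k)}\}/g^{k,i}$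 if $g^{k,i}>0$, $=\min\{z^{k,i}_{p^k_i}-l_{p^k_i},u_{j(k)}-z^{k,i}_{j(k)}\}/|g^{k,i}|$ if $g^{k,i}<0$, $=0$ if $g^{k,i}=0$; choose $A^{k,i}\in[A_l,A_u]$, set $\Delta^{k,i}=\min\{\bar\alpha^{k,i},A^{k,i}\}$; starting from $\alpha=\Delta^{k,i}$, while $f(z^{k,i}+\alpha d^{k,i})>f(z^{k,i})+\gamma\alpha\nabla f(z^{k,i})^Td^{k,i}$ replace $\alpha$ by $\delta\alpha$; $\alpha^{k,i}$ is the final $\alpha$ and $z^{k,i+1}=z^{k,i}+\alpha^{k,i}d^{k,i}$. Then $x^{k+1}=z^{k,n+1}$. Standing assumptions: $\mathcal L_0=\{x\in\mathcal F: f(x)\le f(x^0)\}$ is nonempty and compact, and every $x\in\mathcal L_0$ has some index $i$ with $l_i<x_i<u_i$. *)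

theory Defs
  imports "HOL-Analysis.Analysis" "HOL-Library.Extended_Real"
begin

text \<open>Vectors in R^n are modelled as real^'n with a finite index type 'n, n = CARD('n).
  Bounds are extended reals: l i \<in> R \<union> {-\<infinity>}, u i \<in> R \<union> {+\<infinity>}.\<close>

definition feasible :: "('n::finite \<Rightarrow> ereal) \<Rightarrow> ('n \<Rightarrow> ereal) \<Rightarrow> real \<Rightarrow> real^'n \<Rightarrow> bool" where
  "feasible l u b x \<longleftrightarrow> (\<Sum>i\<in>UNIV. x $ i) = b \<and> (\<forall>i. l i \<le> ereal (x $ i) \<and> ereal (x $ i) \<le> u i)"

definition Dh :: "('n::finite \<Rightarrow> ereal) \<Rightarrow> ('n \<Rightarrow> ereal) \<Rightarrow> real^'n \<Rightarrow> 'n \<Rightarrow> ereal" where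
  "Dh l u x h = min (ereal (x $ h) - l h) (u h - ereal (x $ h))"

definition Dmax :: "('n::finite \<Rightarrow> ereal) \<Rightarrow> ('n \<Rightarrow> ereal) \<Rightarrow> real^'n \<Rightarrow> ereal" where
  "Dmax l u x = Max (range (Dh l u x))"

definition alpha_bar :: "('n::finite \<Rightarrow> ereal) \<Rightarrow> ('n \<Rightarrow> ereal) \<Rightarrow> real^'n \<Rightarrow> 'n \<Rightarrow> 'n \<Rightarrow> real \<Rightarrow> ereal" where
  "alpha_bar l u z jj pp g =
     (if g > 0 then min (u pp - ereal (z $ pp)) (ereal (z $ jj) - l jj) / ereal g
      else if g < 0 then min (ereal (z $ pp) - l pp) (u jj - ereal (z $ jj)) / ereal \<bar>g\<bar>
      else 0)"

definition armijo :: "(real^'n \<Rightarrow> real) \<Rightarrow> (real^'n \<Rightarrow> real^'n) \<Rightarrow> real \<Rightarrow> real^'n \<Rightarrow> real^'n \<Rightarrow> real \<Rightarrow> bool" where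
  "armijo f gradf \<gamma> z d a \<longleftrightarrow> \<not> (f (z + a *\<^sub>R d) > f z + \<gamma> * a * (gradf z \<bullet> d))"

text \<open>One run of AC2CD: x outer iterates, z k i inner iterates (i = 1..n+1), jj k the index j(k),
  p k i the permutation p^k_i (i = 1..n), A k i the trial steps A^{k,i}, alpha k i the accepted steps.
  The backtracking loop yields alpha = delta^m * Delta with m the least exponent satisfying Armijo.\<close>

definition ac2cd ::
  "(real^'n::finite \<Rightarrow> real) \<Rightarrow> (real^'n \<Rightarrow> real^'n) \<Rightarrow> ('n \<Rightarrow> ereal) \<Rightarrow> ('n \<Rightarrow> ereal) \<Rightarrow> real \<Rightarrow>
   real \<Rightarrow> real \<Rightarrow> real \<Rightarrow> real \<Rightarrow> real \<Rightarrow>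
   (nat \<Rightarrow> real^'n) \<Rightarrow> (nat \<Rightarrow> nat \<Rightarrow> real^'n) \<Rightarrow> (nat \<Rightarrow> 'n) \<Rightarrow> (nat \<Rightarrow> nat \<Rightarrow> 'n) \<Rightarrow>
   (nat \<Rightarrow> nat \<Rightarrow> real) \<Rightarrow> (nat \<Rightarrow> nat \<Rightarrow> real) \<Rightarrow> bool" where
  "ac2cd f gradf l u b \<tau> \<gamma> \<delta> Al Au x z jj p A alpha \<longleftrightarrow>
     feasible l u b (x 0) \<and>
     (\<forall>k. Dh l u (x k) (jj k) \<ge> ereal \<tau> * Dmax l u (x k) \<and>
          bij_betw (p k) {1..CARD('n)} UNIV \<and>
          z k 1 = x k \<and>
          x (Suc k) = z k (CARD('n) + 1) \<and>
          (\<forall>i\<in>{1..CARD('n)}.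
             let zi = z k i; pp = p k i; jk = jj k;
                 g = gradf zi $ jk - gradf zi $ pp;
                 d = g *\<^sub>R (axis pp 1 - axis jk 1);
                 \<Delta> = real_of_ereal (min (alpha_bar l u zi jk pp g) (ereal (A k i)))
             in A k i \<in> {Al..Au} \<and>
                (\<exists>m::nat. alpha k i = \<delta> ^ m * \<Delta> \<and> armijo f gradf \<gamma> zi d (\<delta> ^ m * \<Delta>) \<and>
                          (\<forall>m'<m. \<not> armijo f gradf \<gamma> zi d (\<delta> ^ m' * \<Delta>))) \<and>
                z k (Suc i) = zi + alpha k i *\<^sub>R d))"

end

theory Submission
  imports Defs
begin

lemma step_comp: "(zz + c *\<^sub>R (axis pp 1 - axis jk 1)) $ q = zz $ q + c * ((if q = pp then 1 else 0) - (if q = jk then 1 else 0))"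
  by (simp add: axis_def)

lemma coord_unchanged:
  fixes zz :: "nat \<Rightarrow> real^'n::finite"
  assumes step: "\<forall>i\<in>{1..n}. zz (Suc i) = zz i + c i *\<^sub>R (axis (P i) 1 - axis j 1)"
    and qj: "q \<noteq> j" and nP: "\<forall>i\<in>{i0..<m}. P i \<noteq> q" and "1 \<le> i0" "i0 \<le> m" "m \<le> n+1"
  shows "zz m $ q = zz i0 $ q"
  using assms(4-6) nP
proof (induction m)
  case 0 then show ?case by simp
next
  case (Suc m)
  show ?case
  proof (cases "i0 = Suc m")
    case True then show ?thesis by simp
  next
    case False
    then have "i0 \<le> m" using Suc by simp
    then have IH: "zz m $ q = zz i0 $ q" using Suc by auto
    have "m \<in> {1..n}" using Suc \<open>i0 \<le> m\<close> by auto
    then have "zz (Suc m) = zz m + c m *\<^sub>R (axis (P m) 1 - axis j 1)" using step by blast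
    moreover have "P m \<noteq> q" using Suc \<open>i0 \<le> m\<close> by auto
    ultimately show ?thesis using IH qj by (simp add: axis_def)
  qed
qed

lemma coord_diff:
  fixes zz :: "nat \<Rightarrow> real^'n::finite"
  assumes step: "\<forall>i\<in>{1..n}. zz (Suc i) = zz i + c i *\<^sub>R (axis (P i) 1 - axis j 1)"
    and inj: "inj_on P {1..n}" and i: "i \<in> {1..n}" and qj: "P i \<noteq> j"
  shows "zz (n+1) $ P i - zz 1 $ P i = c i"
proof -
  have n1: "\<forall>i'\<in>{1..<i}. P i' \<noteq> P i"
  proof
    fix i' assume "i' \<in> {1..<i}"
    then have "i' \<noteq> i" "i' \<in> {1..n}" using i by auto
    then show "P i' \<noteq> P i" using inj_on_contraD[OF inj] i by blast
  qed
  have n2: "\<forall>i'\<in>{Suc i..<n+1}. P i' \<noteq> P i"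
  proof
    fix i' assume "i' \<in> {Suc i..<n+1}"
    then have "i' \<noteq> i" "i' \<in> {1..n}" using i by auto
    then show "P i' \<noteq> P i" using inj_on_contraD[OF inj] i by blast
  qed
  have i1: "1 \<le> i" "i \<le> n" using i by auto
  have a: "zz i $ P i = zz 1 $ P i"
    using coord_unchanged[OF step qj n1] i1 by simp
  have b: "zz (n+1) $ P i = zz (Suc i) $ P i"
    using coord_unchanged[OF step qj n2] i1 by simp
  have "zz (Suc i) = zz i + c i *\<^sub>R (axis (P i) 1 - axis j 1)" using step i by blast
  then have "zz (Suc i) $ P i = zz i $ P i + c i" using qj by (simp add: axis_def)
  then show ?thesis using a b by simp
qed

lemma coord_j:
  fixes zz :: "nat \<Rightarrow> real^'n::finite"
  assumes step: "\<forall>i\<in>{1..n}. zz (Suc i) = zz i + c i *\<^sub>R (axis (P i) 1 - axis j 1)"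
    and cb: "\<forall>i\<in>{1..n}. P i \<noteq> j \<longrightarrow> \<bar>c i\<bar> \<le> N" and N: "N \<ge> 0"
    and m: "1 \<le> m" "m \<le> n+1"
  shows "\<bar>zz m $ j - zz 1 $ j\<bar> \<le> real (m - 1) * N"
  using m
proof (induction m)
  case 0 then show ?case by simp
next
  case (Suc m)
  show ?case
  proof (cases "m = 0")
    case True then show ?thesis by simp
  next
    case False
    then have IH: "\<bar>zz m $ j - zz 1 $ j\<bar> \<le> real (m - 1) * N" using Suc by auto
    have mi: "m \<in> {1..n}" using Suc False by auto
    then have st: "zz (Suc m) = zz m + c m *\<^sub>R (axis (P m) 1 - axis j 1)" using step by blast
    show ?thesis
    proof (cases "P m = j")
      case True
      then have "zz (Suc m) $ j = zz m $ j" using st by (simp add: axis_def)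
      moreover have "real (m - 1) * N \<le> real (Suc m - 1) * N" by (rule mult_right_mono) (use N in auto)
      ultimately show ?thesis using IH by linarith
    next
      case F: False
      have "zz (Suc m) $ j = zz m $ j - c m" using st F by (simp add: axis_def)
      moreover have "\<bar>c m\<bar> \<le> N" using cb mi F by blast
      moreover have "real (Suc m - 1) * N = real (m - 1) * N + N" using False by (simp add: of_nat_diff algebra_simps)
      ultimately show ?thesis using IH by linarith
    qed
  qed
qed

lemma box_step:
  fixes zz :: "real^'n::finite"
  assumes fz: "feasible l u b zz" and pj: "pp \<noteq> jk" and t: "t \<ge> 0"
    and t1: "ereal t \<le> u pp - ereal (zz $ pp)" and t2: "ereal t \<le> ereal (zz $ jk) - l jk"
  shows "feasible l u b (zz + t *\<^sub>R (axis pp 1 - axis jk 1))"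
proof -
  have s: "(\<Sum>i\<in>UNIV. (zz + t *\<^sub>R (axis pp 1 - axis jk 1)) $ i) = (\<Sum>i\<in>UNIV. zz $ i)"
  proof -
    have ax: "(\<Sum>i\<in>UNIV. axis q (1::real) $ i) = 1" for q by (simp add: axis_def)
    have "(\<Sum>i\<in>UNIV. (zz + t *\<^sub>R (axis pp 1 - axis jk 1)) $ i) = (\<Sum>i\<in>UNIV. zz $ i) + t * (\<Sum>i\<in>UNIV. axis pp (1::real) $ i) - t * (\<Sum>i\<in>UNIV. axis jk (1::real) $ i)"
      by (simp add: sum.distrib sum_subtractf sum_distrib_left algebra_simps)
    then show ?thesis by (simp add: ax)
  qed
  have up: "ereal (zz $ pp + t) \<le> u pp"
    using t1 by (cases "u pp") auto
  have lj: "l jk \<le> ereal (zz $ jk - t)"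
    using t2 by (cases "l jk") auto
  have "l i \<le> ereal ((zz + t *\<^sub>R (axis pp 1 - axis jk 1)) $ i) \<and> ereal ((zz + t *\<^sub>R (axis pp 1 - axis jk 1)) $ i) \<le> u i" for i
  proof -
    have fi: "l i \<le> ereal (zz $ i)" "ereal (zz $ i) \<le> u i" using fz by (auto simp: feasible_def)
    consider "i = pp" | "i = jk" | "i \<noteq> pp" "i \<noteq> jk" by blast
    then show ?thesis
    proof cases
      case 1
      then have eq: "(zz + t *\<^sub>R (axis pp 1 - axis jk 1)) $ i = zz $ pp + t" using pj by (simp add: axis_def)
      moreover have "l i \<le> ereal (zz $ pp + t)"
      proof -
        have a: "l pp \<le> ereal (zz $ pp)" using fi(1) 1 by simp
        have b: "ereal (zz $ pp) \<le> ereal (zz $ pp + t)" using t by simp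
        from order_trans[OF a b] show ?thesis using 1 by simp
      qed
      ultimately show ?thesis using up 1 unfolding eq by simp
    next
      case 2
      then have eq: "(zz + t *\<^sub>R (axis pp 1 - axis jk 1)) $ i = zz $ jk - t" using pj by (simp add: axis_def)
      moreover have "ereal (zz $ jk - t) \<le> u i"
      proof -
        have a: "ereal (zz $ jk) \<le> u jk" using fi(2) 2 by simp
        have b: "ereal (zz $ jk - t) \<le> ereal (zz $ jk)" using t by simp
        from order_trans[OF b a] show ?thesis using 2 by simp
      qed
      ultimately show ?thesis using lj 2 unfolding eq by simp
    next
      case 3
      then show ?thesis using fi by (simp add: axis_def)
    qed
  qed
  then show ?thesis using s fz by (simp add: feasible_def)
qed

lemma delta_facts:
  assumes M: "M \<ge> 0" and G: "G > 0" and Ah: "Ah > 0"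
    and D: "\<Delta> = real_of_ereal (min (M / ereal G) (ereal Ah))"
  shows "0 \<le> \<Delta> \<and> ereal (\<Delta> * G) \<le> M"
proof (cases M)
  case (real r)
  have r0: "r \<ge> 0" using M real by simp
  have q: "M / ereal G = ereal (r / G)" using real G by (simp add: divide_ereal_def divide_inverse)
  have mm: "min (ereal (r/G)) (ereal Ah) = ereal (min (r/G) Ah)"
    by (cases "r/G \<le> Ah") (auto simp: min_def)
  have DD: "\<Delta> = min (r/G) Ah"
  proof -
    have "\<Delta> = real_of_ereal (min (ereal (r/G)) (ereal Ah))" using D q by simp
    also have "\<dots> = real_of_ereal (ereal (min (r/G) Ah))" using mm by (rule arg_cong)
    also have "\<dots> = min (r/G) Ah" by (simp only: real_of_ereal.simps)
    finally show ?thesis .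
  qed
  have "min (r/G) Ah * G \<le> r"
  proof -
    have "min (r/G) Ah * G \<le> (r/G) * G" by (rule mult_right_mono) (use G in auto)
    also have "\<dots> = r" using G by simp
    finally show ?thesis .
  qed
  moreover have "0 \<le> min (r/G) Ah" using r0 G Ah by simp
  ultimately show ?thesis unfolding DD real by simp
next
  case PInf
  have "M / ereal G = \<infinity>" using PInf G by simp
  then have "\<Delta> = Ah" unfolding D by simp
  then show ?thesis using PInf Ah by simp
next
  case MInf
  then show ?thesis using M by simp
qed

lemma step_ok:
  fixes zz :: "real^'n::finite"
  assumes fz: "feasible l u b zz"
   and gdef: "g = gradf zz $ jk - gradf zz $ pp"
   and Ddef: "\<Delta> = real_of_ereal (min (alpha_bar l u zz jk pp g) (ereal Ah))"
   and Ah: "Ah > 0" and dl: "0 < \<delta>" "\<delta> < 1" and gm: "\<gamma> > 0"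
   and arm: "armijo f gradf \<gamma> zz (g *\<^sub>R (axis pp 1 - axis jk 1)) (\<delta>^m * \<Delta>)"
  shows "feasible l u b (zz + (\<delta>^m * \<Delta>) *\<^sub>R (g *\<^sub>R (axis pp 1 - axis jk 1)))
       \<and> f (zz + (\<delta>^m * \<Delta>) *\<^sub>R (g *\<^sub>R (axis pp 1 - axis jk 1))) \<le> f zz"
proof (cases "g = 0")
  case True then show ?thesis using fz by simp
next
  case gnz: False
  then have pj: "pp \<noteq> jk" using gdef by auto
  have fi: "\<And>i. l i \<le> ereal (zz $ i) \<and> ereal (zz $ i) \<le> u i" using fz by (auto simp: feasible_def)
  have dm: "0 < \<delta>^m" "\<delta>^m \<le> 1" using dl by (auto simp: power_le_one)
  define a where "a = \<delta>^m * \<Delta>"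
  have feas_and_a: "feasible l u b (zz + a *\<^sub>R (g *\<^sub>R (axis pp 1 - axis jk 1))) \<and> a \<ge> 0"
  proof (cases "g > 0")
    case True
    define M where "M = min (u pp - ereal (zz $ pp)) (ereal (zz $ jk) - l jk)"
    have M0: "M \<ge> 0" unfolding M_def using fi[of pp] fi[of jk]
      by (simp add: ereal_diff_positive)
    have "alpha_bar l u zz jk pp g = M / ereal g" using True by (simp add: alpha_bar_def M_def)
    then have "\<Delta> = real_of_ereal (min (M / ereal g) (ereal Ah))" unfolding Ddef by (rule arg_cong)
    then have df: "0 \<le> \<Delta> \<and> ereal (\<Delta> * g) \<le> M" by (rule delta_facts[OF M0 True Ah])
    have a0: "a \<ge> 0" using df dm a_def by simp
    have "a \<le> \<Delta>" using df dm a_def by (simp add: mult_left_le_one_le)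
    then have "a * g \<le> \<Delta> * g" using True by (simp add: mult_right_mono)
    then have "ereal (a*g) \<le> M" using df by (meson ereal_less_eq(3) order_trans)
    then have "feasible l u b (zz + (a*g) *\<^sub>R (axis pp 1 - axis jk 1))"
      using box_step[OF fz pj] a0 True unfolding M_def by auto
    then show ?thesis using a0 by simp
  next
    case False
    then have gneg: "g < 0" using gnz by simp
    define M where "M = min (u jk - ereal (zz $ jk)) (ereal (zz $ pp) - l pp)"
    have M0: "M \<ge> 0" unfolding M_def using fi[of pp] fi[of jk]
      by (simp add: ereal_diff_positive)
    have "alpha_bar l u zz jk pp g = min (ereal (zz $ pp) - l pp) (u jk - ereal (zz $ jk)) / ereal \<bar>g\<bar>"
      using gneg unfolding alpha_bar_def by simp
    also have "min (ereal (zz $ pp) - l pp) (u jk - ereal (zz $ jk)) = M" unfolding M_def by (rule min.commute)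
    finally have "alpha_bar l u zz jk pp g = M / ereal \<bar>g\<bar>" .
    then have "\<Delta> = real_of_ereal (min (M / ereal \<bar>g\<bar>) (ereal Ah))" unfolding Ddef by (rule arg_cong)
    moreover have "\<bar>g\<bar> > 0" using gnz by simp
    ultimately have df: "0 \<le> \<Delta> \<and> ereal (\<Delta> * \<bar>g\<bar>) \<le> M" using delta_facts[OF M0 _ Ah] by blast
    have a0: "a \<ge> 0" using df dm a_def by simp
    have "a \<le> \<Delta>" using df dm a_def by (simp add: mult_left_le_one_le)
    then have "a * \<bar>g\<bar> \<le> \<Delta> * \<bar>g\<bar>" by (simp add: mult_right_mono)
    then have "ereal (a*\<bar>g\<bar>) \<le> M" using df by (meson ereal_less_eq(3) order_trans)
    then have "feasible l u b (zz + (a*\<bar>g\<bar>) *\<^sub>R (axis jk 1 - axis pp 1))"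
      using box_step[OF fz pj[symmetric]] a0 unfolding M_def by auto
    moreover have "(a*\<bar>g\<bar>) *\<^sub>R (axis jk 1 - axis pp 1) = a *\<^sub>R (g *\<^sub>R (axis pp 1 - axis jk 1))"
      using gneg by (simp add: vec_eq_iff axis_def)
    ultimately have "feasible l u b (zz + a *\<^sub>R (g *\<^sub>R (axis pp 1 - axis jk 1)))" by metis
    then show ?thesis using a0 by blast
  qed
  have inner: "gradf zz \<bullet> (g *\<^sub>R (axis pp 1 - axis jk 1)) = - (g * g)"
  proof -
    have "gradf zz \<bullet> (g *\<^sub>R (axis pp 1 - axis jk 1)) = g * (gradf zz \<bullet> axis pp 1 - gradf zz \<bullet> axis jk 1)"
      by (simp add: inner_diff_right)
    also have "\<dots> = g * (gradf zz $ pp - gradf zz $ jk)" by (simp add: inner_axis)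
    also have "\<dots> = - (g * g)" using gdef by (metis minus_diff_eq mult_minus_right)
    finally show ?thesis .
  qed
  have "f (zz + a *\<^sub>R (g *\<^sub>R (axis pp 1 - axis jk 1))) \<le> f zz + \<gamma> * a * (- (g * g))"
    using arm inner unfolding armijo_def a_def by simp
  moreover have "\<gamma> * a * (- (g * g)) \<le> 0" using feas_and_a gm
    by (simp add: mult_nonneg_nonneg)
  ultimately have "f (zz + a *\<^sub>R (g *\<^sub>R (axis pp 1 - axis jk 1))) \<le> f zz" by linarith
  then show ?thesis using feas_and_a unfolding a_def by blast
qed

theorem proposition2:
  fixes f :: "real^'n::finite \<Rightarrow> real" and gradf :: "real^'n \<Rightarrow> real^'n"
    and l u :: "'n \<Rightarrow> ereal" and b \<tau> \<gamma> \<delta> Al Au :: real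
    and x :: "nat \<Rightarrow> real^'n" and z :: "nat \<Rightarrow> nat \<Rightarrow> real^'n"
    and jj :: "nat \<Rightarrow> 'n" and p :: "nat \<Rightarrow> nat \<Rightarrow> 'n" and A alpha :: "nat \<Rightarrow> nat \<Rightarrow> real"
    and xstar :: "real^'n"
  assumes n2: "CARD('n) \<ge> 2"
    and bounds: "\<forall>i. l i \<noteq> \<infinity> \<and> u i \<noteq> -\<infinity> \<and> l i < u i"
    and deriv: "\<forall>y. (f has_derivative (\<lambda>h. gradf y \<bullet> h)) (at y)"
    and cont: "continuous_on UNIV gradf"
    and lipschitz: "\<exists>L. \<forall>y w. norm (gradf y - gradf w) \<le> L * norm (y - w)"
    and params: "0 < \<tau> \<and> \<tau> \<le> 1 \<and> 0 < \<gamma> \<and> \<gamma> < 1 \<and> 0 < \<delta> \<and> \<delta> < 1 \<and> 0 < Al \<and> Al \<le> Au"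
    and L0: "{y. feasible l u b y \<and> f y \<le> f (x 0)} \<noteq> {} \<and> compact {y. feasible l u b y \<and> f y \<le> f (x 0)}"
    and L0_interior: "\<forall>y. feasible l u b y \<and> f y \<le> f (x 0) \<longrightarrow> (\<exists>i. l i < ereal (y $ i) \<and> ereal (y $ i) < u i)"
    and run: "ac2cd f gradf l u b \<tau> \<gamma> \<delta> Al Au x z jj p A alpha"
    and conv: "x \<longlonglongrightarrow> xstar"
  shows "\<exists>kz. \<forall>k\<ge>kz. \<forall>i\<in>{1..CARD('n)+1}.
           l (jj k) < ereal (z k i $ jj k) \<and> ereal (z k i $ jj k) < u (jj k)"
proof -
  define g where "g k i = gradf (z k i) $ jj k - gradf (z k i) $ p k i" for k i
  define d where "d k i = g k i *\<^sub>R (axis (p k i) 1 - axis (jj k) (1::real))" for k i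
  define Dl where "Dl k i = real_of_ereal (min (alpha_bar l u (z k i) (jj k) (p k i) (g k i)) (ereal (A k i)))" for k i
  have R: "feasible l u b (x 0)"
    "\<And>k. Dh l u (x k) (jj k) \<ge> ereal \<tau> * Dmax l u (x k)"
    "\<And>k. bij_betw (p k) {1..CARD('n)} UNIV"
    "\<And>k. z k 1 = x k"
    "\<And>k. x (Suc k) = z k (CARD('n) + 1)"
    using run unfolding ac2cd_def by auto
  have S: "A k i \<in> {Al..Au} \<and> (\<exists>m::nat. alpha k i = \<delta> ^ m * Dl k i \<and> armijo f gradf \<gamma> (z k i) (d k i) (\<delta> ^ m * Dl k i))
      \<and> z k (Suc i) = z k i + alpha k i *\<^sub>R d k i" if "i \<in> {1..CARD('n)}" for k i
  proof -
    have "let zi = z k i; pp = p k i; jk = jj k;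
                 g = gradf zi $ jk - gradf zi $ pp;
                 d = g *\<^sub>R (axis pp 1 - axis jk 1);
                 \<Delta> = real_of_ereal (min (alpha_bar l u zi jk pp g) (ereal (A k i)))
             in A k i \<in> {Al..Au} \<and>
                (\<exists>m::nat. alpha k i = \<delta> ^ m * \<Delta> \<and> armijo f gradf \<gamma> zi d (\<delta> ^ m * \<Delta>) \<and>
                          (\<forall>m'<m. \<not> armijo f gradf \<gamma> zi d (\<delta> ^ m' * \<Delta>))) \<and>
                z k (Suc i) = zi + alpha k i *\<^sub>R d"
      using run that unfolding ac2cd_def by blast
    then show ?thesis unfolding Let_def g_def d_def Dl_def by blast
  qed
  have inner: "feasible l u b (z k i) \<and> f (z k i) \<le> f (x k)"
    if fx: "feasible l u b (x k)" and i: "i \<in> {1..CARD('n)+1}" for k i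
    using i
  proof (induction i)
    case 0 then show ?case by simp
  next
    case (Suc i)
    show ?case
    proof (cases "i = 0")
      case True then show ?thesis using R(4) fx by simp
    next
      case False
      then have i1: "i \<in> {1..CARD('n)}" using Suc by auto
      then have IH: "feasible l u b (z k i) \<and> f (z k i) \<le> f (x k)" using Suc by auto
      from S[OF i1] obtain m where m: "alpha k i = \<delta> ^ m * Dl k i"
        "armijo f gradf \<gamma> (z k i) (d k i) (\<delta> ^ m * Dl k i)" and Ak: "A k i \<ge> Al"
        and zs: "z k (Suc i) = z k i + alpha k i *\<^sub>R d k i" by auto
      have "A k i > 0" using Ak params by linarith
      moreover have "0 < \<delta>" "\<delta> < 1" "0 < \<gamma>" using params by auto
      ultimately have "feasible l u b (z k i + (\<delta> ^ m * Dl k i) *\<^sub>R d k i) \<and> f (z k i + (\<delta> ^ m * Dl k i) *\<^sub>R d k i) \<le> f (z k i)"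
        unfolding d_def using step_ok[OF conjunct1[OF IH] g_def Dl_def _ _ _ _ m(2)[unfolded d_def]] by blast
      then have "feasible l u b (z k (Suc i)) \<and> f (z k (Suc i)) \<le> f (z k i)"
        using zs m(1) by simp
      then show ?thesis using IH by auto
    qed
  qed
  have xk: "feasible l u b (x k) \<and> f (x k) \<le> f (x 0)" for k
  proof (induction k)
    case 0 then show ?case using R(1) by simp
  next
    case (Suc k)
    then have "feasible l u b (z k (CARD('n)+1)) \<and> f (z k (CARD('n)+1)) \<le> f (x k)"
      using inner by auto
    then show ?case using Suc R(5) by auto
  qed
  have comp: "(\<lambda>k. x k $ i) \<longlonglongrightarrow> xstar $ i" for i
    using conv by (rule tendsto_vec_nth)
  have fxs: "feasible l u b xstar"
  proof -
    have "(\<lambda>k. \<Sum>i\<in>UNIV. x k $ i) \<longlonglongrightarrow> (\<Sum>i\<in>UNIV. xstar $ i)"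
      by (intro tendsto_sum comp)
    moreover have "(\<Sum>i\<in>UNIV. x k $ i) = b" for k using xk[of k] by (simp add: feasible_def)
    ultimately have sb: "(\<Sum>i\<in>UNIV. xstar $ i) = b" by (simp add: LIMSEQ_const_iff)
    have "l i \<le> ereal (xstar $ i) \<and> ereal (xstar $ i) \<le> u i" for i
    proof
      have lk: "l i \<le> ereal (x k $ i)" for k using xk[of k] by (simp add: feasible_def)
      show "l i \<le> ereal (xstar $ i)"
      proof (cases "l i")
        case (real r)
        then have "r \<le> x k $ i" for k using lk[of k] by simp
        then have "r \<le> xstar $ i" using LIMSEQ_le_const[OF comp] by blast
        then show ?thesis using real by simp
      next
        case PInf then show ?thesis using bounds by auto
      next
        case MInf then show ?thesis by simp
      qed
      have uk: "ereal (x k $ i) \<le> u i" for k using xk[of k] by (simp add: feasible_def)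
      show "ereal (xstar $ i) \<le> u i"
      proof (cases "u i")
        case (real r)
        then have "x k $ i \<le> r" for k using uk[of k] by simp
        then have "xstar $ i \<le> r" using LIMSEQ_le_const2[OF comp] by blast
        then show ?thesis using real by simp
      next
        case MInf then show ?thesis using bounds by auto
      next
        case PInf then show ?thesis by simp
      qed
    qed
    then show ?thesis using sb by (simp add: feasible_def)
  qed
  have fle: "f xstar \<le> f (x 0)"
  proof -
    have "isCont f xstar" using deriv has_derivative_continuous by blast
    then have "(\<lambda>k. f (x k)) \<longlonglongrightarrow> f xstar" using conv isCont_tendsto_compose by blast
    then show ?thesis using xk LIMSEQ_le_const2 by blast
  qed
  obtain i0 where i0: "l i0 < ereal (xstar $ i0)" "ereal (xstar $ i0) < u i0"
    using L0_interior fxs fle by blast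
  obtain e1 where e1: "e1 > 0" "l i0 \<le> ereal (xstar $ i0 - e1)"
  proof (cases "l i0")
    case (real r) then show ?thesis using that[of "xstar $ i0 - r"] i0 by simp
  next
    case PInf then show ?thesis using bounds by auto
  next
    case MInf then show ?thesis using that[of 1] by simp
  qed
  obtain e2 where e2: "e2 > 0" "ereal (xstar $ i0 + e2) \<le> u i0"
  proof (cases "u i0")
    case (real r) then show ?thesis using that[of "r - xstar $ i0"] i0 by simp
  next
    case MInf then show ?thesis using bounds by auto
  next
    case PInf then show ?thesis using that[of 1] by simp
  qed
  define e where "e = min e1 e2"
  have ee: "e > 0" "e \<le> e1" "e \<le> e2" using e1 e2 unfolding e_def by auto
  have "ereal (xstar $ i0 - e1) \<le> ereal (xstar $ i0 - e)" using ee by simp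
  then have e_l: "l i0 \<le> ereal (xstar $ i0 - e)" using e1(2) by (rule order_trans[rotated])
  have "ereal (xstar $ i0 + e) \<le> ereal (xstar $ i0 + e2)" using ee by simp
  then have e_u: "ereal (xstar $ i0 + e) \<le> u i0" using e2(2) by (rule order_trans)
  note e = ee(1) e_l e_u
  define eta where "eta = \<tau> * e / 2"
  have eta: "eta > 0" using params e unfolding eta_def by simp
  have ncard: "real CARD('n) > 0" using n2 by simp
  have ev1: "eventually (\<lambda>k. dist (x k $ i0) (xstar $ i0) < e/2) sequentially"
    by (rule tendstoD[OF comp[of i0]]) (use e in simp)
  have "(\<lambda>k. x (Suc k) - x k) \<longlonglongrightarrow> xstar - xstar"
    by (intro tendsto_diff LIMSEQ_Suc conv)
  then have "eventually (\<lambda>k. dist (x (Suc k) - x k) 0 < eta / real CARD('n)) sequentially"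
    using tendstoD eta ncard by fastforce
  then have ev2: "eventually (\<lambda>k. real CARD('n) * norm (x (Suc k) - x k) < eta) sequentially"
    by eventually_elim (use ncard in \<open>simp add: dist_norm pos_less_divide_eq mult.commute\<close>)
  obtain K where K: "\<And>k. k \<ge> K \<Longrightarrow> dist (x k $ i0) (xstar $ i0) < e/2 \<and> real CARD('n) * norm (x (Suc k) - x k) < eta"
    using eventually_conj[OF ev1 ev2] unfolding eventually_sequentially by blast
  show ?thesis
  proof (intro exI allI impI ballI)
    fix k i assume kK: "K \<le> k" and i: "i \<in> {1..CARD('n)+1}"
    define j where "j = jj k"
    define N where "N = norm (x (Suc k) - x k)"
    have Kk: "dist (x k $ i0) (xstar $ i0) < e/2" "real CARD('n) * N < eta" using K[OF kK] N_def by auto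
    have kd: "x k $ i0 > xstar $ i0 - e/2" "x k $ i0 < xstar $ i0 + e/2"
      using Kk(1) unfolding dist_real_def by linarith+
    have Dh0: "Dh l u (x k) i0 \<ge> ereal (e/2)"
    proof -
      have a: "ereal (x k $ i0) - l i0 \<ge> ereal (e/2)"
      proof (cases "l i0")
        case (real r) then show ?thesis using e(2) kd by (simp; linarith)
      next
        case PInf then show ?thesis using bounds by auto
      next
        case MInf then show ?thesis by simp
      qed
      have b: "u i0 - ereal (x k $ i0) \<ge> ereal (e/2)"
      proof (cases "u i0")
        case (real r) then show ?thesis using e(3) kd by (simp; linarith)
      next
        case MInf then show ?thesis using bounds by auto
      next
        case PInf then show ?thesis by simp
      qed
      show ?thesis using a b unfolding Dh_def by simp
    qed
    have "Dmax l u (x k) \<ge> Dh l u (x k) i0" unfolding Dmax_def by (rule Max_ge) auto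
    then have "ereal \<tau> * Dmax l u (x k) \<ge> ereal \<tau> * ereal (e/2)"
      using Dh0 params by (intro ereal_mult_left_mono) auto
    then have "Dh l u (x k) j \<ge> ereal eta" using R(2)[of k] unfolding j_def eta_def by simp
    then have Dj: "ereal (x k $ j) - l j \<ge> ereal eta" "u j - ereal (x k $ j) \<ge> ereal eta"
      unfolding Dh_def by auto
    have lj: "l j \<le> ereal (x k $ j - eta)"
    proof (cases "l j")
      case (real r) then show ?thesis using Dj(1) by simp
    next
      case PInf then show ?thesis using bounds by auto
    next
      case MInf then show ?thesis by simp
    qed
    have uj: "ereal (x k $ j + eta) \<le> u j"
    proof (cases "u j")
      case (real r) then show ?thesis using Dj(2) by simp
    next
      case MInf then show ?thesis using bounds by auto
    next
      case PInf then show ?thesis by simp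
    qed
    define c where "c i = alpha k i * g k i" for i
    have step: "\<forall>i\<in>{1..CARD('n)}. z k (Suc i) = z k i + c i *\<^sub>R (axis (p k i) 1 - axis j 1)"
    proof
      fix i assume "i \<in> {1..CARD('n)}"
      then have "z k (Suc i) = z k i + alpha k i *\<^sub>R d k i" using S by blast
      then show "z k (Suc i) = z k i + c i *\<^sub>R (axis (p k i) 1 - axis j 1)" by (simp add: c_def d_def j_def)
    qed
    have inj: "inj_on (p k) {1..CARD('n)}" using R(3) bij_betw_imp_inj_on by blast
    have cb: "\<forall>i\<in>{1..CARD('n)}. p k i \<noteq> j \<longrightarrow> \<bar>c i\<bar> \<le> N"
    proof (intro ballI impI)
      fix i assume i: "i \<in> {1..CARD('n)}" and pj: "p k i \<noteq> j"
      have "z k (CARD('n)+1) $ p k i - z k 1 $ p k i = c i"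
        by (rule coord_diff[OF step inj i pj])
      then have "c i = (x (Suc k) - x k) $ p k i" using R(4,5) by simp
      then show "\<bar>c i\<bar> \<le> N" unfolding N_def using component_le_norm_cart by metis
    qed
    have "\<bar>z k i $ j - z k 1 $ j\<bar> \<le> real (i - 1) * N"
      by (rule coord_j[OF step cb]) (use i N_def in auto)
    moreover have "real (i - 1) * N \<le> real CARD('n) * N"
      using i N_def by (intro mult_right_mono) auto
    ultimately have "\<bar>z k i $ j - x k $ j\<bar> < eta" using Kk(2) R(4) by simp
    then have "x k $ j - eta < z k i $ j" "z k i $ j < x k $ j + eta" by auto
    then have z1: "ereal (x k $ j - eta) < ereal (z k i $ j)" and z2: "ereal (z k i $ j) < ereal (x k $ j + eta)"
      by simp_all
    have "l j < ereal (z k i $ j)" using le_less_trans[OF lj z1] .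
    moreover have "ereal (z k i $ j) < u j" using less_le_trans[OF z2 uj] .
    ultimately show "l (jj k) < ereal (z k i $ jj k) \<and> ereal (z k i $ jj k) < u (jj k)"
      unfolding j_def by simp
  qed
qed

end
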